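(* Let $(\mathfrak{g},[\cdot,\cdot]_{\mathfrak{g}})$ be a Leibniz algebra over a field $\mathbf{K}$, $(V;\rho^L,\rho^R)$ a representation, and $T:V\to\mathfrak{g}$ a relative Rota-Baxter operator. If two formal deformations $\bar T_t=\sum_{i\ge0}\bar{\mathfrak{T}}_it^i$ and $T_t=\sum_{i\ge0}\mathfrak{T}_it^i$ of $T$ are equivalent, then their infinitesimals $\bar{\mathfrak{T}}_1$ and $\mathfrak{T}_1$ lie in $\mathcal{Z}^1(V,\mathfrak{g})$ and define the same class in $\mathcal{H}^1(V,\mathfrak{g})$.
   Context: A Leibniz algebra is a vector space $\mathfrak{g}$ with bilinear $[\cdot,\cdot]_{\mathfrak{g}}$ satisfying $[x,[y,z]_{\mathfrak{g}}]_{\mathfrak{g}}=[[x,y]_{\mathfrak{g}},z]_{\mathfrak{g}}+[y,[x,z]_{\mathfrak{g}}]_{\mathfrak{g}}$. A representation $(V;\rho^L,\rho^R)$: linear $\rho^L,\rho^R:\mathfrak{g}\to\mathfrak{gl}(V)$ with $\rho^L([x,y]_{\mathfrak{g}})=[\rho^L(x),\rho^L(y)]$, $\rho^R([x,y]_{\mathfrak{g}})=[\rho^L(x),\rho^R(y)]$, $\rho^R(y)\rho^L(x)=-\rho^R(y)\rho^R(x)$. $L_xy=[x,y]_{\mathfrak{g}}$. A relative Rota-Baxter operator is a linear $T:V\to\mathfrak{g}$ with $[Tv_1,Tv_2]_{\mathfrak{g}}=T(\rho^L(Tv_1)v_2+\rho^R(Tv_2)v_1)$. Cohomology of $T$: $C^n(V,\mathfrak{g})=\mathrm{Hom}(\otimes^nV,\mathfrak{g})$,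 $C^0=\mathfrak{g}$, with $\partial_T:C^n\to C^{n+1}$, $(\partial_Tf)(v_1,\dots,v_{n+1})=\sum_{i=1}^n(-1)^{i+1}[Tv_i,f(v_1,\dots,\hat v_i,\dots,v_{n+1})]_{\mathfrak{g}}-\sum_{i=1}^n(-1)^{i+1}T\rho^R(f(v_1,\dots,\hat v_i,\dots,v_{n+1}))v_i+(-1)^{n+1}[f(v_1,\dots,v_n),Tv_{n+1}]_{\mathfrak{g}}+(-1)^nT\rho^L(f(v_1,\dots,v_n))v_{n+1}+\sum_{1\le i<j\le n+1}(-1)^if(v_1,\dots,\hat v_i,\dots,v_{j-1},\rho^L(Tv_i)v_j+\rho^R(Tv_j)v_i,v_{j+1},\dots,v_{n+1})$ (for $x\in C^0$: $(\partial_Tx)(v)=T\rho^L(x)v-[x,Tv]_{\mathfrak{g}}$); $\mathcal{Z}^k=\ker\partial_T\cap C^k$, $\mathcal{B}^k=\partial_T(C^{k-1})$, $\mathcal{H}^k=\mathcal{Z}^k/\mathcal{B}^k$. $\mathfrak{g}[[t]]$, $V[[t]]$ denote formal power series; the bracket and $\rho^L,\rho^R$ extend $\mathbf{K}[[t]]$-bilinearly. A formal deformation of $T$ is $T_t=\sum_{i\ge0}\mathfrak{T}_it^i$ with $\mathfrak{T}_i\in\mathrm{Hom}(V,\mathfrak{g})$, $\mathfrak{T}_0=T$, extended $\mathbf{K}[[t]]$-linearly, such that $[T_t(u),T_t(v)]_{\mathfrak{g}}=T_t(\rho^L(T_t(u))v+\rho^R(T_t(v))u)$ for all $u,v\in V$.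 Its infinitesimal is $\mathfrak{T}_1$. Two formal deformations $\bar T_t$, $T_t$ of $T$ are equivalent if there exist $x\in\mathfrak{g}$, $\phi_i\in\mathfrak{gl}(\mathfrak{g})$, $\varphi_i\in\mathfrak{gl}(V)$ ($i\ge2$) such that $\phi_t=\mathrm{Id}_{\mathfrak{g}}+tL_x+\sum_{i\ge2}\phi_it^i$ and $\varphi_t=\mathrm{Id}_V+t\rho^L(x)+\sum_{i\ge2}\varphi_it^i$ satisfy: $[\phi_t(y),\phi_t(z)]_{\mathfrak{g}}=\phi_t[y,z]_{\mathfrak{g}}$ for $y,z\in\mathfrak{g}$; $\varphi_t\rho^L(y)u=\rho^L(\phi_t(y))\varphi_t(u)$ and $\varphi_t\rho^R(y)u=\rho^R(\phi_t(y))\varphi_t(u)$ for $y\in\mathfrak{g},u\in V$; and $T_t\circ\varphi_t=\phi_t\circ\bar T_t$ as $\mathbf{K}[[t]]$-module maps. *)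

theory Defs
  imports Main "HOL.Vector_Spaces"
begin

text \<open>Vector spaces over a field 'k are modelled by types 'g, 'v with scalar
multiplications sg, sv (locale vector_space). Linear maps: locale predicate linear.\<close>

definition leibniz_algebra ::
  "('k::field \<Rightarrow> 'g::ab_group_add \<Rightarrow> 'g) \<Rightarrow> ('g \<Rightarrow> 'g \<Rightarrow> 'g) \<Rightarrow> bool" where
  "leibniz_algebra sg br \<longleftrightarrow> Vector_Spaces.vector_space sg
     \<and> (\<forall>x. Vector_Spaces.linear sg sg (br x)) \<and> (\<forall>y. Vector_Spaces.linear sg sg (\<lambda>x. br x y))
     \<and> (\<forall>x y z. br x (br y z) = br (br x y) z + br y (br x z))"

definition leibniz_rep ::
  "('k::field \<Rightarrow> 'g::ab_group_add \<Rightarrow> 'g) \<Rightarrow> ('g \<Rightarrow> 'g \<Rightarrow> 'g)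
   \<Rightarrow> ('k \<Rightarrow> 'v::ab_group_add \<Rightarrow> 'v) \<Rightarrow> ('g \<Rightarrow> 'v \<Rightarrow> 'v) \<Rightarrow> ('g \<Rightarrow> 'v \<Rightarrow> 'v) \<Rightarrow> bool" where
  "leibniz_rep sg br sv rL rR \<longleftrightarrow> Vector_Spaces.vector_space sv
     \<and> (\<forall>x. Vector_Spaces.linear sv sv (rL x)) \<and> (\<forall>x. Vector_Spaces.linear sv sv (rR x))
     \<and> (\<forall>v. Vector_Spaces.linear sg sv (\<lambda>x. rL x v)) \<and> (\<forall>v. Vector_Spaces.linear sg sv (\<lambda>x. rR x v))
     \<and> (\<forall>x y v. rL (br x y) v = rL x (rL y v) - rL y (rL x v))
     \<and> (\<forall>x y v. rR (br x y) v = rL x (rR y v) - rR y (rL x v))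
     \<and> (\<forall>x y v. rR y (rL x v) = - rR y (rR x v))"

definition relative_RB ::
  "('k::field \<Rightarrow> 'g::ab_group_add \<Rightarrow> 'g) \<Rightarrow> ('g \<Rightarrow> 'g \<Rightarrow> 'g)
   \<Rightarrow> ('k \<Rightarrow> 'v::ab_group_add \<Rightarrow> 'v) \<Rightarrow> ('g \<Rightarrow> 'v \<Rightarrow> 'v) \<Rightarrow> ('g \<Rightarrow> 'v \<Rightarrow> 'v)
   \<Rightarrow> ('v \<Rightarrow> 'g) \<Rightarrow> bool" where
  "relative_RB sg br sv rL rR T \<longleftrightarrow> Vector_Spaces.linear sv sg T
     \<and> (\<forall>u v. br (T u) (T v) = T (rL (T u) v + rR (T v) u))"

text \<open>Formal power series in t with coefficients in a space are coefficient
sequences nat \<Rightarrow> _. A K[[t]]-bilinear extension of a bilinear map b is the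
Cauchy product of coefficient sequences.\<close>

definition fps_bil :: "('a \<Rightarrow> 'b \<Rightarrow> 'c::comm_monoid_add) \<Rightarrow> (nat \<Rightarrow> 'a) \<Rightarrow> (nat \<Rightarrow> 'b) \<Rightarrow> nat \<Rightarrow> 'c" where
  "fps_bil b A B n = (\<Sum>i\<le>n. b (A i) (B (n - i)))"

definition const_ser :: "'a::zero \<Rightarrow> nat \<Rightarrow> 'a" where
  "const_ser u n = (if n = 0 then u else 0)"

definition ser_apply :: "(nat \<Rightarrow> 'a \<Rightarrow> 'b::comm_monoid_add) \<Rightarrow> (nat \<Rightarrow> 'a) \<Rightarrow> nat \<Rightarrow> 'b" where
  "ser_apply F W = fps_bil (\<lambda>f w. f w) F W"

definition ser_comp :: "(nat \<Rightarrow> 'b \<Rightarrow> 'c::comm_monoid_add) \<Rightarrow> (nat \<Rightarrow> 'a \<Rightarrow> 'b) \<Rightarrow> nat \<Rightarrow> 'a \<Rightarrow> 'c" where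
  "ser_comp A B n = (\<lambda>u. \<Sum>i\<le>n. A i (B (n - i) u))"

definition formal_deformation ::
  "('k::field \<Rightarrow> 'g::ab_group_add \<Rightarrow> 'g) \<Rightarrow> ('g \<Rightarrow> 'g \<Rightarrow> 'g)
   \<Rightarrow> ('k \<Rightarrow> 'v::ab_group_add \<Rightarrow> 'v) \<Rightarrow> ('g \<Rightarrow> 'v \<Rightarrow> 'v) \<Rightarrow> ('g \<Rightarrow> 'v \<Rightarrow> 'v)
   \<Rightarrow> ('v \<Rightarrow> 'g) \<Rightarrow> (nat \<Rightarrow> 'v \<Rightarrow> 'g) \<Rightarrow> bool" where
  "formal_deformation sg br sv rL rR T Tt \<longleftrightarrow>
     (\<forall>i. Vector_Spaces.linear sv sg (Tt i)) \<and> Tt 0 = T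
     \<and> (\<forall>u v. fps_bil br (\<lambda>n. Tt n u) (\<lambda>n. Tt n v)
            = ser_apply Tt (\<lambda>n. fps_bil rL (\<lambda>m. Tt m u) (const_ser v) n
                                  + fps_bil rR (\<lambda>m. Tt m v) (const_ser u) n))"

definition equivalent_deformations ::
  "('k::field \<Rightarrow> 'g::ab_group_add \<Rightarrow> 'g) \<Rightarrow> ('g \<Rightarrow> 'g \<Rightarrow> 'g)
   \<Rightarrow> ('k \<Rightarrow> 'v::ab_group_add \<Rightarrow> 'v) \<Rightarrow> ('g \<Rightarrow> 'v \<Rightarrow> 'v) \<Rightarrow> ('g \<Rightarrow> 'v \<Rightarrow> 'v)
   \<Rightarrow> (nat \<Rightarrow> 'v \<Rightarrow> 'g) \<Rightarrow> (nat \<Rightarrow> 'v \<Rightarrow> 'g) \<Rightarrow> bool" where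
  "equivalent_deformations sg br sv rL rR Tb Tt \<longleftrightarrow>
     (\<exists>x phi psi.
        phi 0 = id \<and> phi 1 = br x \<and> (\<forall>i\<ge>2. Vector_Spaces.linear sg sg (phi i))
      \<and> psi 0 = id \<and> psi 1 = rL x \<and> (\<forall>i\<ge>2. Vector_Spaces.linear sv sv (psi i))
      \<and> (\<forall>y z. fps_bil br (\<lambda>n. phi n y) (\<lambda>n. phi n z) = (\<lambda>n. phi n (br y z)))
      \<and> (\<forall>y u. (\<lambda>n. psi n (rL y u)) = fps_bil rL (\<lambda>n. phi n y) (\<lambda>n. psi n u))
      \<and> (\<forall>y u. (\<lambda>n. psi n (rR y u)) = fps_bil rR (\<lambda>n. phi n y) (\<lambda>n. psi n u))
      \<and> ser_comp Tt psi = ser_comp phi Tb)"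

text \<open>Cochains: C^n(V,g) = multilinear maps V^n \<rightarrow> g, represented as functions on
lists of length n (and 0 on lists of other lengths).\<close>

definition cochain :: "('k::field \<Rightarrow> 'g::ab_group_add \<Rightarrow> 'g) \<Rightarrow> ('k \<Rightarrow> 'v::ab_group_add \<Rightarrow> 'v)
   \<Rightarrow> nat \<Rightarrow> ('v list \<Rightarrow> 'g) set" where
  "cochain sg sv n = {f. (\<forall>vs. length vs \<noteq> n \<longrightarrow> f vs = 0)
       \<and> (\<forall>vs k. length vs = n \<longrightarrow> k < n \<longrightarrow> Vector_Spaces.linear sv sg (\<lambda>w. f (vs[k := w])))}"

definition del_at :: "nat \<Rightarrow> 'a list \<Rightarrow> 'a list" where
  "del_at i vs = take i vs @ drop (Suc i) vs"

text \<open>The coboundary operator d_T : C^n \<rightarrow> C^{n+1} (indices of v_1..v_{n+1} are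
1-based in the paper, 0-based in lists).\<close>
definition coboundary ::
  "('k::field \<Rightarrow> 'g::ab_group_add \<Rightarrow> 'g) \<Rightarrow> ('g \<Rightarrow> 'g \<Rightarrow> 'g)
   \<Rightarrow> ('g \<Rightarrow> 'v::ab_group_add \<Rightarrow> 'v) \<Rightarrow> ('g \<Rightarrow> 'v \<Rightarrow> 'v)
   \<Rightarrow> ('v \<Rightarrow> 'g) \<Rightarrow> nat \<Rightarrow> ('v list \<Rightarrow> 'g) \<Rightarrow> 'v list \<Rightarrow> 'g" where
  "coboundary sg br rL rR T n f vs =
    (if length vs = Suc n then
       (\<Sum>i\<in>{1..n}. sg ((-1) ^ (i + 1)) (br (T (vs ! (i - 1))) (f (del_at (i - 1) vs))))
     - (\<Sum>i\<in>{1..n}. sg ((-1) ^ (i + 1)) (T (rR (f (del_at (i - 1) vs)) (vs ! (i - 1)))))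
     + sg ((-1) ^ (n + 1)) (br (f (take n vs)) (T (vs ! n)))
     + sg ((-1) ^ n) (T (rL (f (take n vs)) (vs ! n)))
     + (\<Sum>(i, j)\<in>{(i, j). 1 \<le> i \<and> i < j \<and> j \<le> Suc n}.
          sg ((-1) ^ i)
            (f (del_at (i - 1) (vs[j - 1 := rL (T (vs ! (i - 1))) (vs ! (j - 1))
                                          + rR (T (vs ! (j - 1))) (vs ! (i - 1))]))))
     else 0)"

definition cocycles where
  "cocycles sg sv br rL rR T k = {f \<in> cochain sg sv k. coboundary sg br rL rR T k f = (\<lambda>_. 0)}"

definition coboundaries where
  "coboundaries sg sv br rL rR T k = coboundary sg br rL rR T k ` cochain sg sv k"

definition same_class where
  "same_class sg sv br rL rR T k f f' \<longleftrightarrow>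
     f \<in> cocycles sg sv br rL rR T k \<and> f' \<in> cocycles sg sv br rL rR T k
     \<and> (\<lambda>vs. f vs - f' vs) \<in> coboundaries sg sv br rL rR T (k - 1)"

definition as_1cochain :: "('v \<Rightarrow> 'g::zero) \<Rightarrow> 'v list \<Rightarrow> 'g" where
  "as_1cochain h vs = (if length vs = 1 then h (hd vs) else 0)"

end

theory Submission
  imports Defs
begin

lemma pairs2: "{(i, j). 1 \<le> i \<and> i < j \<and> j \<le> Suc 1} = {(1::nat,2::nat)}"
  by auto
lemma pairs1: "{(i, j). 1 \<le> i \<and> i < j \<and> j \<le> Suc 0} = ({}::(nat*nat) set)"
  by auto
lemma cob1:
  assumes vs: "Vector_Spaces.vector_space sg"
  shows "coboundary sg br rL rR T 1 f [a,b] = br (T a) (f [b]) - T (rR (f [b]) a) + br (f [a]) (T b) - T (rL (f [a]) b) - f [rL (T a) b + rR (T b) a]"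
proof -
  interpret vector_space sg by fact
  show ?thesis unfolding coboundary_def pairs2 by (simp add: del_at_def)
qed
lemma cob0:
  assumes vs: "Vector_Spaces.vector_space sg"
  shows "coboundary sg br rL rR T 0 f [a] = T (rL (f []) a) - br (f []) (T a)"
proof -
  interpret vector_space sg by fact
  show ?thesis unfolding coboundary_def pairs1 by simp
qed
lemma lin_add: "Vector_Spaces.linear s1 s2 f \<Longrightarrow> f (a + b) = f a + f b"
  by (simp add: linear_iff)
lemma lin_zero: "Vector_Spaces.linear s1 s2 f \<Longrightarrow> f 0 = 0"
  using lin_add[of s1 s2 f 0 0] by simp

lemma ag_aux: "(A::'a::ab_group_add) + B = P + Q + R \<Longrightarrow> A - Q + B - P - R = 0"
  by (simp add: algebra_simps)

lemma cocyc:
  fixes sg :: "'k::field \<Rightarrow> 'g::ab_group_add \<Rightarrow> 'g" and sv :: "'k \<Rightarrow> 'v::ab_group_add \<Rightarrow> 'v"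
    and D :: "nat \<Rightarrow> 'v \<Rightarrow> 'g"
  assumes la: "leibniz_algebra sg br" and rep: "leibniz_rep sg br sv rL rR"
    and rb: "relative_RB sg br sv rL rR T"
    and fd: "formal_deformation sg br sv rL rR T D"
  shows "as_1cochain (D 1) \<in> cocycles sg sv br rL rR T 1"
proof -
  have vsg: "Vector_Spaces.vector_space sg" using la by (simp add: leibniz_algebra_def)
  have linT: "Vector_Spaces.linear sv sg T" using rb by (simp add: relative_RB_def)
  have linL: "\<And>x. Vector_Spaces.linear sv sv (rL x)" and linR: "\<And>x. Vector_Spaces.linear sv sv (rR x)"
    using rep by (simp_all add: leibniz_rep_def)
  have fd': "(\<forall>i. Vector_Spaces.linear sv sg (D i)) \<and> D 0 = T
     \<and> (\<forall>u v. fps_bil br (\<lambda>n. D n u) (\<lambda>n. D n v)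
            = ser_apply D (\<lambda>n. fps_bil rL (\<lambda>m. D m u) (const_ser v) n
                                  + fps_bil rR (\<lambda>m. D m v) (const_ser u) n))"
    using fd unfolding formal_deformation_def .
  have linD: "\<And>i. Vector_Spaces.linear sv sg (D i)" using fd' by blast
  have D0: "D 0 = T" using fd' by blast
  have eq: "\<And>u v. fps_bil br (\<lambda>n. D n u) (\<lambda>n. D n v)
            = ser_apply D (\<lambda>n. fps_bil rL (\<lambda>m. D m u) (const_ser v) n
                                  + fps_bil rR (\<lambda>m. D m v) (const_ser u) n)"
    using fd' by blast
  have ch: "as_1cochain (D 1) \<in> cochain sg sv 1"
    unfolding cochain_def
  proof (intro CollectI conjI allI impI)
    fix vs :: "'v list" assume "length vs \<noteq> 1" then show "as_1cochain (D 1) vs = 0"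
      by (simp add: as_1cochain_def)
  next
    fix vs :: "'v list" and k :: nat assume "length vs = 1" "k < 1"
    then obtain v where "vs = [v]" "k = 0" by (cases vs) auto
    then show "Vector_Spaces.linear sv sg (\<lambda>w. as_1cochain (D 1) (vs[k := w]))"
      using linD[of 1] by (simp add: as_1cochain_def)
  qed
  have cb: "coboundary sg br rL rR T 1 (as_1cochain (D 1)) vs = 0" for vs
  proof (cases "length vs = 2")
    case False then show ?thesis by (simp add: coboundary_def)
  next
    case True
    then obtain a b where vs: "vs = [a,b]"
      by (metis One_nat_def Suc_1 length_0_conv length_Suc_conv)
    have "br (T a) (D 1 b) + br (D 1 a) (T b) = T (rL (T a) 0 + rL (D 1 a) b + (rR (T b) 0 + rR (D 1 b) a)) + D 1 (rL (T a) b + rR (T b) a)"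
      using fun_cong[OF eq[of a b], of 1]
      by (simp add: fps_bil_def ser_apply_def const_ser_def D0)
    then have "br (T a) (D 1 b) + br (D 1 a) (T b) = T (rL (D 1 a) b) + T (rR (D 1 b) a) + D 1 (rL (T a) b + rR (T b) a)"
      by (simp add: lin_zero[OF linL] lin_zero[OF linR] lin_add[OF linT])
    then show ?thesis unfolding vs cob1[OF vsg] as_1cochain_def
      using ag_aux by simp
  qed
  show ?thesis unfolding cocycles_def using ch cb by auto
qed

lemma ag_aux2: "(A::'a::ab_group_add) + B = C + E \<Longrightarrow> C - B = A - E"
  by (simp add: algebra_simps)

theorem theorem3p18:
  fixes sg :: "'k::field \<Rightarrow> 'g::ab_group_add \<Rightarrow> 'g"
    and sv :: "'k \<Rightarrow> 'v::ab_group_add \<Rightarrow> 'v"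
    and br :: "'g \<Rightarrow> 'g \<Rightarrow> 'g"
    and rL rR :: "'g \<Rightarrow> 'v \<Rightarrow> 'v"
    and T :: "'v \<Rightarrow> 'g"
    and Tb Tt :: "nat \<Rightarrow> 'v \<Rightarrow> 'g"
  assumes "leibniz_algebra sg br"
    and "leibniz_rep sg br sv rL rR"
    and "relative_RB sg br sv rL rR T"
    and "formal_deformation sg br sv rL rR T Tb"
    and "formal_deformation sg br sv rL rR T Tt"
    and "equivalent_deformations sg br sv rL rR Tb Tt"
  shows "as_1cochain (Tb 1) \<in> cocycles sg sv br rL rR T 1
       \<and> as_1cochain (Tt 1) \<in> cocycles sg sv br rL rR T 1
       \<and> same_class sg sv br rL rR T 1 (as_1cochain (Tb 1)) (as_1cochain (Tt 1))"
proof -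
  have c1: "as_1cochain (Tb 1) \<in> cocycles sg sv br rL rR T 1"
    using cocyc[OF assms(1-4)] .
  have c2: "as_1cochain (Tt 1) \<in> cocycles sg sv br rL rR T 1"
    using cocyc[OF assms(1-3,5)] .
  have vsg: "Vector_Spaces.vector_space sg" using assms(1) by (simp add: leibniz_algebra_def)
  have Tb0: "Tb 0 = T" using assms(4) by (simp add: formal_deformation_def)
  have Tt0: "Tt 0 = T" using assms(5) by (simp add: formal_deformation_def)
  obtain x phi psi where ph0: "phi 0 = id" and ph1: "phi 1 = br x" and ps0: "psi 0 = id"
     and ps1: "psi 1 = rL x" and sc: "ser_comp Tt psi = ser_comp phi Tb"
    using assms(6) unfolding equivalent_deformations_def by blast
  define f0 :: "'v list \<Rightarrow> 'g" where "f0 = (\<lambda>vs. if vs = [] then x else 0)"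
  have f0c: "f0 \<in> cochain sg sv 0" by (simp add: cochain_def f0_def)
  have "(\<lambda>vs. as_1cochain (Tb 1) vs - as_1cochain (Tt 1) vs) = coboundary sg br rL rR T 0 f0"
  proof
    fix vs :: "'v list"
    show "as_1cochain (Tb 1) vs - as_1cochain (Tt 1) vs = coboundary sg br rL rR T 0 f0 vs"
    proof (cases "length vs = 1")
      case False then show ?thesis by (simp add: coboundary_def as_1cochain_def)
    next
      case True
      then obtain u where vs: "vs = [u]" by (metis One_nat_def length_0_conv length_Suc_conv)
      have "T (rL x u) + Tt 1 u = Tb 1 u + br x (T u)"
        using fun_cong[OF fun_cong[OF sc, of 1], of u]
        by (simp add: ser_comp_def ph0 ps0 Tb0 Tt0 ph1[unfolded One_nat_def] ps1[unfolded One_nat_def])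
      from ag_aux2[OF this] show ?thesis unfolding vs cob0[OF vsg] by (simp add: as_1cochain_def f0_def)
    qed
  qed
  then have "(\<lambda>vs. as_1cochain (Tb 1) vs - as_1cochain (Tt 1) vs) \<in> coboundaries sg sv br rL rR T (1 - 1)"
    unfolding coboundaries_def using f0c by simp
  then show ?thesis using c1 c2 unfolding same_class_def by simp
qed

end
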